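(* Let $N\ge2$, $V_{th}>0$, and consider a multi-layer feedback spiking neural network with discrete integrate-and-fire neurons organized in layers $l=1,\dots,N$, with weight matrices $\mathbf{F}^1$ (input to layer 1), $\mathbf{F}^{l}$ (layer $l-1$ to layer $l$, $l=2,\dots,N$), feedback matrix $\mathbf{W}^1$ (layer $N$ to layer 1), and biases $\mathbf{b}^l$. With $\mathbf{u}^l[0]=\mathbf{0}$, $\mathbf{s}^l[0]=\mathbf{0}$, the dynamics are $$\mathbf{u}^1[t+1]=\mathbf{u}^1[t]+\mathbf{W}^1\mathbf{s}^N[t]+\mathbf{F}^1\mathbf{x}[t]+\mathbf{b}^1-V_{th}\mathbf{s}^1[t+1],$$ $$\mathbf{u}^{l+1}[t+1]=\mathbf{u}^{l+1}[t]+\mathbf{F}^{l+1}\mathbf{s}^l[t+1]+\mathbf{b}^{l+1}-V_{th}\mathbf{s}^{l+1}[t+1],\quad l=1,\dots,N-1,$$ where each spike $\mathbf{s}^l[t+1]$ equals $H(\text{pre-reset potential}-V_{th})$ elementwise ($H$ the Heaviside step). Define $\mathbf{a}^l[t]=\frac1t\sum_{\tau=1}^t\mathbf{s}^l[\tau]$ and $\overline{\mathbf{x}}[t]=\frac1{t+1}\sum_{\tau=0}^t\mathbf{x}[\tau]$, and let ${\mathbf{u}^l}^+[t]$ denote the parts of the membrane potentials for which $$\mathbf{a}^1[t+1]=\sigma\!\left(\tfrac1{V_{th}}\left(\tfrac{t}{t+1}\mathbf{W}^1\mathbf{a}^N[t]+\mathbf{F}^1\overline{\mathbf{x}}[t]+\mathbf{b}^1-\tfrac{{\mathbf{u}^1}^+[t+1]}{t+1}\right)\right),$$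 $$\mathbf{a}^{l+1}[t+1]=\sigma\!\left(\tfrac1{V_{th}}\left(\mathbf{F}^{l+1}\mathbf{a}^l[t+1]+\mathbf{b}^{l+1}-\tfrac{{\mathbf{u}^{l+1}}^+[t+1]}{t+1}\right)\right),\ l=1,\dots,N-1,$$ hold. Suppose $\overline{\mathbf{x}}[t]\to\mathbf{x}^*$, and there exist constants $c$ and $\gamma<1$ such that $|{\mathbf{u}^l_i}^+[t]|\le c$ for all $i,l,t$ and $\|\mathbf{W}^1\|_2\|\mathbf{F}^N\|_2\cdots\|\mathbf{F}^2\|_2\le\gamma V_{th}^N$. Then $\mathbf{a}^l[t]\to{\mathbf{a}^l}^*$ for every $l$, where ${\mathbf{a}^1}^*=f_1\big(f_N\circ\cdots\circ f_2({\mathbf{a}^1}^* ),\mathbf{x}^*\big)$ and ${\mathbf{a}^{l+1}}^*=f_{l+1}({\mathbf{a}^l}^* )$, with $f_1(\mathbf{a},\mathbf{x})=\sigma\big(\frac1{V_{th}}(\mathbf{W}^1\mathbf{a}+\mathbf{F}^1\mathbf{x}+\mathbf{b}^1)\big)$ and $f_l(\mathbf{a})=\sigma\big(\frac1{V_{th}}(\mathbf{F}^l\mathbf{a}+\mathbf{b}^l)\big)$ for $l\ge2$.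
   Context: $\sigma$ is applied elementwise with $\sigma(x)=1$ for $x>1$, $\sigma(x)=x$ for $0\le x\le1$, $\sigma(x)=0$ for $x<0$. $\|\cdot\|_2$ is the spectral norm. In the paper each membrane potential is decomposed as $\mathbf{u}^l_i[t]={\mathbf{u}^l_i}^-[t]+{\mathbf{u}^l_i}^+[t]$, the first term collecting the accumulated negative and excess positive terms (those clipped by $\sigma$), and ${\mathbf{u}^l}^+[t]$ being the remainder, so that the displayed relations hold. *)

theory Defs
  imports "HOL-Analysis.Analysis"
begin

text \<open>Vectors are functions nat => real (only indices below the dimension matter);
 a p x q matrix is a function nat => nat => real with entries A i j, i < p, j < q.\<close>

definition sigma :: "real \<Rightarrow> real" where
  "sigma x = (if x > 1 then 1 else if x < 0 then 0 else x)"

definition heaviside :: "real \<Rightarrow> real" where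
  "heaviside x = (if x \<ge> 0 then 1 else 0)"

definition mat_vec :: "nat \<Rightarrow> (nat \<Rightarrow> nat \<Rightarrow> real) \<Rightarrow> (nat \<Rightarrow> real) \<Rightarrow> nat \<Rightarrow> real" where
  "mat_vec q A v = (\<lambda>i. \<Sum>j<q. A i j * v j)"

definition spec_norm :: "nat \<Rightarrow> nat \<Rightarrow> (nat \<Rightarrow> nat \<Rightarrow> real) \<Rightarrow> real" where
  "spec_norm p q A = Sup {sqrt (\<Sum>i<p. (mat_vec q A v i)\<^sup>2) | v. (\<Sum>j<q. (v j)\<^sup>2) \<le> 1}"

definition avg_rate :: "(nat \<Rightarrow> nat \<Rightarrow> nat \<Rightarrow> real) \<Rightarrow> nat \<Rightarrow> nat \<Rightarrow> nat \<Rightarrow> real" where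
  "avg_rate s l t i = (1 / real t) * (\<Sum>\<tau>\<in>{1..t}. s l i \<tau>)"

definition avg_input :: "(nat \<Rightarrow> nat \<Rightarrow> real) \<Rightarrow> nat \<Rightarrow> nat \<Rightarrow> real" where
  "avg_input x t j = (1 / real (t + 1)) * (\<Sum>\<tau>\<le>t. x \<tau> j)"

definition f_first :: "real \<Rightarrow> (nat \<Rightarrow> nat) \<Rightarrow> nat \<Rightarrow> nat \<Rightarrow> (nat \<Rightarrow> nat \<Rightarrow> real)
   \<Rightarrow> (nat \<Rightarrow> nat \<Rightarrow> nat \<Rightarrow> real) \<Rightarrow> (nat \<Rightarrow> nat \<Rightarrow> real)
   \<Rightarrow> (nat \<Rightarrow> real) \<Rightarrow> (nat \<Rightarrow> real) \<Rightarrow> nat \<Rightarrow> real" where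
  "f_first Vth n m N W F b a x = (\<lambda>i. sigma ((1 / Vth) *
      (mat_vec (n N) W a i + mat_vec m (F 1) x i + b 1 i)))"

definition f_layer :: "real \<Rightarrow> (nat \<Rightarrow> nat) \<Rightarrow> (nat \<Rightarrow> nat \<Rightarrow> nat \<Rightarrow> real)
   \<Rightarrow> (nat \<Rightarrow> nat \<Rightarrow> real) \<Rightarrow> nat \<Rightarrow> (nat \<Rightarrow> real) \<Rightarrow> nat \<Rightarrow> real" where
  "f_layer Vth n F b l a = (\<lambda>i. sigma ((1 / Vth) * (mat_vec (n (l - 1)) (F l) a i + b l i)))"

fun f_chain :: "real \<Rightarrow> (nat \<Rightarrow> nat) \<Rightarrow> (nat \<Rightarrow> nat \<Rightarrow> nat \<Rightarrow> real)
   \<Rightarrow> (nat \<Rightarrow> nat \<Rightarrow> real) \<Rightarrow> nat \<Rightarrow> (nat \<Rightarrow> real) \<Rightarrow> nat \<Rightarrow> real" where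
  "f_chain Vth n F b 0 a = a"
| "f_chain Vth n F b (Suc 0) a = a"
| "f_chain Vth n F b (Suc (Suc k)) a = f_layer Vth n F b (Suc (Suc k)) (f_chain Vth n F b (Suc k) a)"

end

theory Submission imports Defs begin


lemma sigma_lip: "\<bar>sigma x - sigma y\<bar> \<le> \<bar>x - y\<bar>"
  by (simp add: sigma_def)

lemma sigma_range: "0 \<le> sigma x" "sigma x \<le> 1"
  by (auto simp add: sigma_def)

lemma L2_le_pointwise:
  assumes "\<And>i. i \<in> A \<Longrightarrow> \<bar>f i\<bar> \<le> \<bar>g i\<bar>"
  shows "L2_set f A \<le> L2_set g A"
  unfolding L2_set_def
proof (rule real_sqrt_le_mono, rule sum_mono)
  fix i assume "i \<in> A"
  then show "(f i)\<^sup>2 \<le> (g i)\<^sup>2" using assms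
    by (simp add: abs_le_square_iff)
qed

lemma coord_le_L2:
  assumes "finite A" "i \<in> A"
  shows "\<bar>f i\<bar> \<le> L2_set f A"
proof -
  have "(f i)\<^sup>2 \<le> (\<Sum>j\<in>A. (f j)\<^sup>2)"
    using assms by (intro member_le_sum) auto
  then have "sqrt ((f i)\<^sup>2) \<le> L2_set f A" unfolding L2_set_def
    using real_sqrt_le_mono by blast
  then show ?thesis by simp
qed

lemma mat_vec_diff: "mat_vec q A u i - mat_vec q A v i = mat_vec q A (\<lambda>j. u j - v j) i"
  by (simp add: mat_vec_def sum_subtractf[symmetric] algebra_simps)

lemma mat_vec_scale: "mat_vec q A (\<lambda>j. v j / r) i = mat_vec q A v i / r"
  by (simp add: mat_vec_def sum_divide_distrib)

lemma spec_bdd: "bdd_above {sqrt (\<Sum>i<p. (mat_vec q A v i)\<^sup>2) | v. (\<Sum>j<q. (v j)\<^sup>2) \<le> 1}"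
proof (rule bdd_aboveI[where M="sqrt (\<Sum>i<p. (\<Sum>j<q. \<bar>A i j\<bar>)\<^sup>2)"])
  fix y assume "y \<in> {sqrt (\<Sum>i<p. (mat_vec q A v i)\<^sup>2) | v. (\<Sum>j<q. (v j)\<^sup>2) \<le> 1}"
  then obtain v where yv: "y = sqrt (\<Sum>i<p. (mat_vec q A v i)\<^sup>2)" and v: "(\<Sum>j<q. (v j)\<^sup>2) \<le> 1" by blast
  have vj: "\<bar>v j\<bar> \<le> 1" if "j < q" for j
  proof -
    have "(v j)\<^sup>2 \<le> (\<Sum>j<q. (v j)\<^sup>2)" using that by (intro member_le_sum) auto
    then have "(v j)\<^sup>2 \<le> 1\<^sup>2" using v by simp
    then show ?thesis by (metis abs_le_square_iff abs_one)
  qed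
  have "\<bar>mat_vec q A v i\<bar> \<le> (\<Sum>j<q. \<bar>A i j\<bar>)" for i
  proof -
    have "\<bar>mat_vec q A v i\<bar> \<le> (\<Sum>j<q. \<bar>A i j * v j\<bar>)"
      unfolding mat_vec_def by (rule sum_abs)
    also have "\<dots> \<le> (\<Sum>j<q. \<bar>A i j\<bar>)"
      by (rule sum_mono) (use vj in \<open>auto simp: abs_mult intro: mult_left_le\<close>)
    finally show ?thesis .
  qed
  then have "(mat_vec q A v i)\<^sup>2 \<le> (\<Sum>j<q. \<bar>A i j\<bar>)\<^sup>2" for i
    by (metis abs_le_square_iff abs_idempotent abs_of_nonneg sum_nonneg abs_ge_zero)
  then show "y \<le> sqrt (\<Sum>i<p. (\<Sum>j<q. \<bar>A i j\<bar>)\<^sup>2)"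
    unfolding yv by (intro real_sqrt_le_mono sum_mono) auto
qed

lemma spec_norm_nonneg: "0 \<le> spec_norm p q A"
proof -
  have "sqrt (\<Sum>i<p. (mat_vec q A (\<lambda>_. 0) i)\<^sup>2) \<in> {sqrt (\<Sum>i<p. (mat_vec q A v i)\<^sup>2) | v. (\<Sum>j<q. (v j)\<^sup>2) \<le> 1}"
    by auto
  then have "sqrt (\<Sum>i<p. (mat_vec q A (\<lambda>_. 0) i)\<^sup>2) \<le> spec_norm p q A"
    unfolding spec_norm_def by (rule cSup_upper[OF _ spec_bdd])
  then show ?thesis by (simp add: mat_vec_def)
qed

lemma spec_bound: "L2_set (mat_vec q A v) {..<p} \<le> spec_norm p q A * L2_set v {..<q}"
proof (cases "L2_set v {..<q} = 0")
  case True
  then have "\<forall>j\<in>{..<q}. v j = 0" by (simp add: L2_set_eq_0_iff)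
  then have "mat_vec q A v i = 0" for i by (simp add: mat_vec_def)
  then show ?thesis by (simp add: L2_set_def) (intro mult_nonneg_nonneg spec_norm_nonneg real_sqrt_ge_zero sum_nonneg; simp)
next
  case False
  define r where "r = L2_set v {..<q}"
  have r: "r > 0" using False L2_set_nonneg[of v "{..<q}"] unfolding r_def by linarith
  have r2: "r\<^sup>2 = (\<Sum>j<q. (v j)\<^sup>2)" unfolding r_def L2_set_def
    by (simp add: sum_nonneg)
  have "(\<Sum>j<q. (v j / r)\<^sup>2) = (\<Sum>j<q. (v j)\<^sup>2) / r\<^sup>2"
    by (simp add: power_divide sum_divide_distrib)
  also have "\<dots> = 1" using r by (simp add: r2[symmetric])
  finally have "sqrt (\<Sum>i<p. (mat_vec q A (\<lambda>j. v j / r) i)\<^sup>2) \<in> {sqrt (\<Sum>i<p. (mat_vec q A v i)\<^sup>2) | v. (\<Sum>j<q. (v j)\<^sup>2) \<le> 1}"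
    by (intro CollectI exI[of _ "\<lambda>j. v j / r"]) auto
  then have "sqrt (\<Sum>i<p. (mat_vec q A (\<lambda>j. v j / r) i)\<^sup>2) \<le> spec_norm p q A"
    unfolding spec_norm_def by (rule cSup_upper[OF _ spec_bdd])
  then have "L2_set (\<lambda>i. mat_vec q A v i * (1/r)) {..<p} \<le> spec_norm p q A"
    by (simp add: mat_vec_scale L2_set_def)
  then have "L2_set (mat_vec q A v) {..<p} * (1/r) \<le> spec_norm p q A"
    using L2_set_left_distrib[of "1/r" "mat_vec q A v" "{..<p}"] r by simp
  then show ?thesis using r unfolding r_def[symmetric] by (simp add: field_simps)
qed

lemma sig_pert:
  assumes c: "0 \<le> c"
  shows "L2_set (\<lambda>i. sigma (c * (X i + e i - w i)) - sigma (c * (Y i + e i))) {..<p}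
     \<le> c * (L2_set (\<lambda>i. X i - Y i) {..<p} + L2_set w {..<p})"
proof -
  have "L2_set (\<lambda>i. sigma (c * (X i + e i - w i)) - sigma (c * (Y i + e i))) {..<p}
      \<le> L2_set (\<lambda>i. c * ((X i - Y i) + (- w i))) {..<p}"
  proof (rule L2_le_pointwise)
    fix i
    have "\<bar>sigma (c * (X i + e i - w i)) - sigma (c * (Y i + e i))\<bar> \<le> \<bar>c * (X i + e i - w i) - c * (Y i + e i)\<bar>"
      by (rule sigma_lip)
    also have "\<dots> = \<bar>c * ((X i - Y i) + (- w i))\<bar>" by (simp add: algebra_simps)
    finally show "\<bar>sigma (c * (X i + e i - w i)) - sigma (c * (Y i + e i))\<bar> \<le> \<bar>c * ((X i - Y i) + (- w i))\<bar>" .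
  qed
  also have "\<dots> = c * L2_set (\<lambda>i. (X i - Y i) + (- w i)) {..<p}"
    by (simp add: L2_set_right_distrib[OF c])
  also have "\<dots> \<le> c * (L2_set (\<lambda>i. X i - Y i) {..<p} + L2_set (\<lambda>i. - w i) {..<p})"
    by (rule mult_left_mono[OF L2_set_triangle_ineq c])
  also have "L2_set (\<lambda>i. - w i) {..<p} = L2_set w {..<p}" by (simp add: L2_set_def)
  finally show ?thesis .
qed

lemma sig_nopert:
  assumes c: "0 \<le> c"
  shows "L2_set (\<lambda>i. sigma (c * (X i + e i)) - sigma (c * (Y i + e i))) {..<p}
     \<le> c * L2_set (\<lambda>i. X i - Y i) {..<p}"
  using sig_pert[OF c, of X e "\<lambda>_. 0" Y p] by (simp add: L2_set_def)

lemma mat_lip: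
  "L2_set (\<lambda>i. mat_vec q A u i - mat_vec q A v i) {..<p} \<le> spec_norm p q A * L2_set (\<lambda>j. u j - v j) {..<q}"
  unfolding mat_vec_diff using spec_bound[of q A "\<lambda>j. u j - v j" p] by simp

definition vd :: "nat \<Rightarrow> (nat \<Rightarrow> real) \<Rightarrow> (nat \<Rightarrow> real) \<Rightarrow> real" where
  "vd k u v = L2_set (\<lambda>i. u i - v i) {..<k}"

lemma vd_commute: "vd k u v = vd k v u"
  unfolding vd_def L2_set_def by (simp add: power2_commute)

lemma metric_vd: "Metric_space {v. \<forall>j\<ge>k. v j = 0} (vd k)"
proof
  fix x y :: "nat \<Rightarrow> real" show "0 \<le> vd k x y" by (simp add: vd_def)
  show "vd k x y = vd k y x" by (rule vd_commute)
next
  fix x y :: "nat \<Rightarrow> real" assume "x \<in> {v. \<forall>j\<ge>k. v j = 0}" "y \<in> {v. \<forall>j\<ge>k. v j = 0}"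
  then show "vd k x y = 0 \<longleftrightarrow> x = y"
    unfolding vd_def by (auto simp: L2_set_eq_0_iff intro!: ext) (metis lessThan_iff not_le)
next
  fix x y z :: "nat \<Rightarrow> real"
  have "vd k x z = L2_set (\<lambda>i. (x i - y i) + (y i - z i)) {..<k}" by (simp add: vd_def)
  also have "\<dots> \<le> vd k x y + vd k y z" unfolding vd_def by (rule L2_set_triangle_ineq)
  finally show "vd k x z \<le> vd k x y + vd k y z" .
qed

lemma mcomplete_vd: "Metric_space.mcomplete {v. \<forall>j\<ge>k. v j = 0} (vd k)"
proof -
  interpret Metric_space "{v. \<forall>j\<ge>k. v j = 0}" "vd k" by (rule metric_vd)
  show ?thesis unfolding mcomplete_def
  proof (intro allI impI)
    fix \<sigma> assume C: "MCauchy \<sigma>"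
    have coordC: "Cauchy (\<lambda>n. \<sigma> n i)" if "i < k" for i
      unfolding Cauchy_def
    proof (intro allI impI)
      fix e :: real assume "e > 0"
      then obtain M where M: "\<forall>n n'. M \<le> n \<longrightarrow> M \<le> n' \<longrightarrow> vd k (\<sigma> n) (\<sigma> n') < e"
        using C unfolding MCauchy_def by blast
      show "\<exists>M. \<forall>m\<ge>M. \<forall>n\<ge>M. dist (\<sigma> m i) (\<sigma> n i) < e"
      proof (intro exI allI impI)
        fix m n assume "M \<le> m" "M \<le> n"
        have "\<bar>\<sigma> m i - \<sigma> n i\<bar> \<le> vd k (\<sigma> m) (\<sigma> n)"
          unfolding vd_def using coord_le_L2[of "{..<k}" i "\<lambda>i. \<sigma> m i - \<sigma> n i"] that by simp
        then show "dist (\<sigma> m i) (\<sigma> n i) < e" using M \<open>M \<le> m\<close> \<open>M \<le> n\<close>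
          by (simp add: dist_real_def) (meson le_less_trans)
      qed
    qed
    define a where "a i = (if i < k then lim (\<lambda>n. \<sigma> n i) else 0)" for i
    have lim_i: "(\<lambda>n. \<sigma> n i) \<longlonglongrightarrow> a i" if "i < k" for i
      using coordC[OF that] that unfolding a_def by (simp add: Cauchy_convergent_iff convergent_LIMSEQ_iff)
    have "(\<lambda>n. sqrt (\<Sum>i<k. (\<sigma> n i - a i)\<^sup>2)) \<longlonglongrightarrow> sqrt (\<Sum>i<k. (a i - a i)\<^sup>2)"
      by (intro tendsto_intros tendsto_sum) (use lim_i in auto)
    then have "(\<lambda>n. vd k (\<sigma> n) a) \<longlonglongrightarrow> 0" by (simp add: vd_def L2_set_def)
    moreover have "a \<in> {v. \<forall>j\<ge>k. v j = 0}" by (simp add: a_def)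
    moreover have "\<sigma> n \<in> {v. \<forall>j\<ge>k. v j = 0}" for n using C unfolding MCauchy_def by auto
    ultimately have "limitin mtopology \<sigma> a sequentially"
      unfolding limitin_metric_dist_null by (simp add: always_eventually)
    then show "\<exists>x. limitin mtopology \<sigma> x sequentially" by blast
  qed
qed

lemma contraction_fix:
  assumes "\<rho> < 1" and "\<And>u v. vd k (T u) (T v) \<le> \<rho> * vd k u v"
    and "\<And>u j. j \<ge> k \<Longrightarrow> T u j = 0"
  shows "\<exists>a. T a = a"
proof -
  interpret Metric_space "{v. \<forall>j\<ge>k. v j = 0}" "vd k" by (rule metric_vd)
  have fim: "T \<in> {v. \<forall>j\<ge>k. v j = 0} \<rightarrow> {v. \<forall>j\<ge>k. v j = 0}" using assms(3) by auto
  have ne: "{v. \<forall>j\<ge>k. v j = 0} \<noteq> {}" by (auto intro: exI[of _ "\<lambda>_. 0"])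
  show ?thesis
    by (rule Banach_fixedpoint_thm[OF mcomplete_vd ne fim assms(1)]) (auto intro: assms(2))
qed

lemma contr_seq:
  fixes E D :: "nat \<Rightarrow> real"
  assumes E0: "\<And>t. 0 \<le> E t" and EB: "\<And>t. E t \<le> B"
    and r0: "0 \<le> \<rho>" and r1: "\<rho> < 1" and D: "D \<longlonglongrightarrow> 0"
    and rec: "\<And>t. E (Suc t) \<le> \<rho> * E t + D t"
  shows "E \<longlonglongrightarrow> 0"
proof (rule LIMSEQ_I)
  fix r :: real assume r: "0 < r"
  have B0: "0 \<le> B" using E0[of 0] EB[of 0] by linarith
  obtain T where T: "\<forall>t\<ge>T. norm (D t - 0) < r * (1 - \<rho>) / 2"
    using LIMSEQ_D[OF D, of "r * (1 - \<rho>) / 2"] r r1 by auto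
  have ind: "E (T + k) \<le> \<rho> ^ k * B + r / 2" for k
  proof (induction k)
    case 0 then show ?case using EB[of T] r by simp
  next
    case (Suc k)
    have "E (T + Suc k) \<le> \<rho> * E (T + k) + D (T + k)" using rec[of "T + k"] by simp
    also have "\<dots> \<le> \<rho> * (\<rho> ^ k * B + r / 2) + r * (1 - \<rho>) / 2"
      using T[rule_format, of "T + k"] mult_left_mono[OF Suc.IH r0] by auto
    also have "\<dots> = \<rho> ^ Suc k * B + r / 2" by (simp add: field_simps)
    finally show ?case .
  qed
  have "(\<lambda>k. \<rho> ^ k * B) \<longlonglongrightarrow> 0 * B"
    by (intro tendsto_intros) (use r0 r1 in simp)
  then obtain K where K: "\<forall>k\<ge>K. norm (\<rho> ^ k * B - 0) < r / 2"
    using LIMSEQ_D[of "\<lambda>k. \<rho> ^ k * B" 0 "r/2"] r by auto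
  show "\<exists>no. \<forall>n\<ge>no. norm (E n - 0) < r"
  proof (intro exI allI impI)
    fix t assume t: "T + K \<le> t"
    have "E t = E (T + (t - T))" using t by simp
    also have "\<dots> \<le> \<rho> ^ (t - T) * B + r / 2" by (rule ind)
    also have "\<dots> < r"
    proof -
      have "\<bar>\<rho> ^ (t - T) * B\<bar> < r / 2" using K[rule_format, of "t - T"] t by auto
      then show ?thesis by linarith
    qed
    finally show "norm (E t - 0) < r" using E0[of t] by simp
  qed
qed

lemma inv_lim: "(\<lambda>t. K / (real t + 1)) \<longlonglongrightarrow> 0"
proof -
  have "(\<lambda>t. K * inverse (real (Suc t))) \<longlonglongrightarrow> K * 0"
    by (intro tendsto_intros LIMSEQ_inverse_real_of_nat)
  then show ?thesis by (simp add: divide_inverse add.commute)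
qed

lemma L2_sum_bound:
  assumes "\<And>i. i < k \<Longrightarrow> \<bar>f i\<bar> \<le> M"
  shows "L2_set f {..<k} \<le> real k * M"
proof -
  have "L2_set f {..<k} \<le> (\<Sum>i<k. \<bar>f i\<bar>)" by (rule L2_set_le_sum_abs)
  also have "\<dots> \<le> (\<Sum>i<k. M)" by (rule sum_mono) (use assms in auto)
  finally show ?thesis by simp
qed

lemma alg1:
  fixes V q :: real assumes "V > 0" "q > 0"
  shows "1 / V * (f * (p * e + r) + K / q) = p * (f / V) * e + (f / V * r + K / V / q)"
  using assms by (simp add: field_simps)

lemma alg2:
  fixes r M :: real assumes "r \<ge> 0"
  shows "r / (r + 1) * M = M - M / (r + 1)"
  using assms by (simp add: field_simps)



lemma f_chain_Suc: "1 \<le> l \<Longrightarrow> f_chain Vth n F b (Suc l) a = f_layer Vth n F b (Suc l) (f_chain Vth n F b l a)"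
  by (cases l) auto

theorem theorem3:
  fixes N m :: nat and n :: "nat \<Rightarrow> nat" and Vth c \<gamma> :: real
    and W :: "nat \<Rightarrow> nat \<Rightarrow> real"
    and F :: "nat \<Rightarrow> nat \<Rightarrow> nat \<Rightarrow> real"
    and b :: "nat \<Rightarrow> nat \<Rightarrow> real"
    and x :: "nat \<Rightarrow> nat \<Rightarrow> real"
    and u s up :: "nat \<Rightarrow> nat \<Rightarrow> nat \<Rightarrow> real"
    and xstar :: "nat \<Rightarrow> real"
  assumes N2: "N \<ge> 2" and Vth: "Vth > 0"
    and u0: "\<And>l i. u l i 0 = 0" and s0: "\<And>l i. s l i 0 = 0"
    and spike1: "\<And>t i. i < n 1 \<Longrightarrow>
        s 1 i (t + 1) = heaviside (u 1 i t + mat_vec (n N) W (\<lambda>j. s N j t) i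
           + mat_vec m (F 1) (x t) i + b 1 i - Vth)"
    and mem1: "\<And>t i. i < n 1 \<Longrightarrow>
        u 1 i (t + 1) = u 1 i t + mat_vec (n N) W (\<lambda>j. s N j t) i
           + mat_vec m (F 1) (x t) i + b 1 i - Vth * s 1 i (t + 1)"
    and spikel: "\<And>t l i. 1 \<le> l \<Longrightarrow> l \<le> N - 1 \<Longrightarrow> i < n (l + 1) \<Longrightarrow>
        s (l + 1) i (t + 1) = heaviside (u (l + 1) i t
           + mat_vec (n l) (F (l + 1)) (\<lambda>j. s l j (t + 1)) i + b (l + 1) i - Vth)"
    and meml: "\<And>t l i. 1 \<le> l \<Longrightarrow> l \<le> N - 1 \<Longrightarrow> i < n (l + 1) \<Longrightarrow>
        u (l + 1) i (t + 1) = u (l + 1) i t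
           + mat_vec (n l) (F (l + 1)) (\<lambda>j. s l j (t + 1)) i + b (l + 1) i
           - Vth * s (l + 1) i (t + 1)"
    and rel1: "\<And>t i. i < n 1 \<Longrightarrow>
        avg_rate s 1 (t + 1) i = sigma ((1 / Vth) *
          (real t / real (t + 1) * mat_vec (n N) W (avg_rate s N t) i
           + mat_vec m (F 1) (avg_input x t) i + b 1 i - up 1 i (t + 1) / real (t + 1)))"
    and rell: "\<And>t l i. 1 \<le> l \<Longrightarrow> l \<le> N - 1 \<Longrightarrow> i < n (l + 1) \<Longrightarrow>
        avg_rate s (l + 1) (t + 1) i = sigma ((1 / Vth) *
          (mat_vec (n l) (F (l + 1)) (avg_rate s l (t + 1)) i + b (l + 1) i
           - up (l + 1) i (t + 1) / real (t + 1)))"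
    and xconv: "\<And>j. j < m \<Longrightarrow> (\<lambda>t. avg_input x t j) \<longlonglongrightarrow> xstar j"
    and ubound: "\<And>l i t. 1 \<le> l \<Longrightarrow> l \<le> N \<Longrightarrow> i < n l \<Longrightarrow> \<bar>up l i t\<bar> \<le> c"
    and gamma1: "\<gamma> < 1"
    and normbound: "spec_norm (n 1) (n N) W * (\<Prod>l\<in>{2..N}. spec_norm (n l) (n (l - 1)) (F l))
                      \<le> \<gamma> * Vth ^ N"
  shows "\<exists>astar :: nat \<Rightarrow> nat \<Rightarrow> real.
     (\<forall>i < n 1. astar 1 i = f_first Vth n m N W F b (f_chain Vth n F b N (astar 1)) xstar i)
   \<and> (\<forall>l. 1 \<le> l \<and> l \<le> N - 1 \<longrightarrow>
        (\<forall>i < n (l + 1). astar (l + 1) i = f_layer Vth n F b (l + 1) (astar l) i))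
   \<and> (\<forall>l. 1 \<le> l \<and> l \<le> N \<longrightarrow>
        (\<forall>i < n l. (\<lambda>t. avg_rate s l t i) \<longlonglongrightarrow> astar l i))"
proof -
  define sW where "sW = spec_norm (n 1) (n N) W"
  define sF where "sF l = spec_norm (n l) (n (l - 1)) (F l)" for l
  define P where "P l = (\<Prod>k\<in>{2..l}. sF k / Vth)" for l
  define \<rho> where "\<rho> = sW / Vth * P N"
  define ch where "ch l a = f_chain Vth n F b l a" for l a
  have iV: "0 \<le> 1 / Vth" using Vth by simp
  have sW0: "0 \<le> sW" unfolding sW_def by (rule spec_norm_nonneg)
  have sF0: "0 \<le> sF l" for l unfolding sF_def by (rule spec_norm_nonneg)
  have P0: "0 \<le> P l" for l unfolding P_def using sF0 Vth by (intro prod_nonneg) auto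
  have P1: "P (Suc 0) = 1" unfolding P_def by simp
  have PS: "P (Suc l) = P l * (sF (Suc l) / Vth)" if "1 \<le> l" for l
  proof -
    have "{2..Suc l} = insert (Suc l) {2..l}" using that by auto
    then show ?thesis unfolding P_def by simp
  qed
  have r0: "0 \<le> \<rho>" unfolding \<rho>_def using sW0 P0 Vth by simp
  have r1: "\<rho> < 1"
  proof -
    have "P N = (\<Prod>k\<in>{2..N}. sF k) / Vth ^ (N - 1)"
      unfolding P_def by (simp add: prod_dividef)
    then have "\<rho> = (sW * (\<Prod>k\<in>{2..N}. sF k)) / (Vth * Vth ^ (N - 1))"
      unfolding \<rho>_def by simp
    also have "Vth * Vth ^ (N - 1) = Vth ^ N" using N2
      by (metis One_nat_def Suc_pred less_le_trans pos2 power_Suc zero_less_Suc)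
    finally have "\<rho> = (sW * (\<Prod>k\<in>{2..N}. sF k)) / Vth ^ N" .
    also have "\<dots> \<le> \<gamma>" using normbound Vth unfolding sW_def sF_def
      by (simp add: divide_le_eq)
    finally show ?thesis using gamma1 by simp
  qed
  have chlip: "vd (n l) (ch l u') (ch l v') \<le> P l * vd (n 1) u' v'" if "1 \<le> l" for l u' v'
    using that
  proof (induction l rule: nat_induct_at_least)
    case base then show ?case by (simp add: ch_def P1)
  next
    case (Suc l)
    have "vd (n (Suc l)) (ch (Suc l) u') (ch (Suc l) v')
      = L2_set (\<lambda>i. sigma (1 / Vth * (mat_vec (n l) (F (Suc l)) (ch l u') i + b (Suc l) i))
                   - sigma (1 / Vth * (mat_vec (n l) (F (Suc l)) (ch l v') i + b (Suc l) i))) {..<n (Suc l)}"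
      unfolding ch_def vd_def using Suc.hyps by (simp add: f_chain_Suc f_layer_def)
    also have "\<dots> \<le> 1 / Vth * L2_set (\<lambda>i. mat_vec (n l) (F (Suc l)) (ch l u') i - mat_vec (n l) (F (Suc l)) (ch l v') i) {..<n (Suc l)}"
      by (rule sig_nopert[OF iV])
    also have "\<dots> \<le> 1 / Vth * (sF (Suc l) * vd (n l) (ch l u') (ch l v'))"
      unfolding sF_def vd_def by (intro mult_left_mono[OF _ iV]) (simp add: mat_lip)
    also have "\<dots> \<le> 1 / Vth * (sF (Suc l) * (P l * vd (n 1) u' v'))"
      by (intro mult_left_mono[OF _ iV] mult_left_mono[OF Suc.IH sF0])
    also have "\<dots> = P (Suc l) * vd (n 1) u' v'" using PS[OF Suc.hyps] by simp
    finally show ?case .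
  qed

  define T where "T a = (\<lambda>i. if i < n 1 then f_first Vth n m N W F b (ch N a) xstar i else 0)" for a
  have N1: "1 \<le> N" using N2 by simp
  have Tc: "vd (n 1) (T u') (T v') \<le> \<rho> * vd (n 1) u' v'" for u' v'
  proof -
    have "vd (n 1) (T u') (T v') = L2_set (\<lambda>i. sigma (1 / Vth * (mat_vec (n N) W (ch N u') i + (mat_vec m (F 1) xstar i + b 1 i)))
          - sigma (1 / Vth * (mat_vec (n N) W (ch N v') i + (mat_vec m (F 1) xstar i + b 1 i)))) {..<n 1}"
      unfolding vd_def T_def f_first_def by (intro L2_set_cong) (auto simp: add.assoc)
    also have "\<dots> \<le> 1 / Vth * L2_set (\<lambda>i. mat_vec (n N) W (ch N u') i - mat_vec (n N) W (ch N v') i) {..<n 1}"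
      by (rule sig_nopert[OF iV])
    also have "\<dots> \<le> 1 / Vth * (sW * vd (n N) (ch N u') (ch N v'))"
      unfolding sW_def vd_def by (intro mult_left_mono[OF _ iV]) (simp add: mat_lip)
    also have "\<dots> \<le> 1 / Vth * (sW * (P N * vd (n 1) u' v'))"
      by (intro mult_left_mono[OF _ iV] mult_left_mono[OF chlip[OF N1] sW0])
    also have "\<dots> = \<rho> * vd (n 1) u' v'" unfolding \<rho>_def by simp
    finally show ?thesis .
  qed
  have Tz: "T u' j = 0" if "j \<ge> n 1" for u' j using that unfolding T_def by simp
  obtain A1 where A1: "T A1 = A1" using contraction_fix[OF r1 Tc Tz] by blast
  define astar where "astar l = ch l A1" for l
  have as1: "astar 1 = A1" unfolding astar_def ch_def by simp
  have fix1: "A1 i = f_first Vth n m N W F b (astar N) xstar i" if "i < n 1" for i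
    using fun_cong[OF A1, of i] that unfolding T_def astar_def by simp
  have asS: "astar (Suc l) i = f_layer Vth n F b (Suc l) (astar l) i" if "1 \<le> l" for l i
    unfolding astar_def ch_def using f_chain_Suc[OF that] by simp
  define e where "e l t = vd (n l) (avg_rate s l t) (astar l)" for l t
  have e0: "0 \<le> e l t" for l t unfolding e_def vd_def by simp
  have range: "0 \<le> avg_rate s l t i \<and> avg_rate s l t i \<le> 1" if lh: "1 \<le> l" "l \<le> N" "i < n l" for l t i
  proof (cases t)
    case 0 then show ?thesis by (simp add: avg_rate_def)
  next
    case (Suc t')
    show ?thesis
    proof (cases "l = 1")
      case True
      then show ?thesis using rel1[of i t'] that Suc by (simp add: sigma_range)
    next
      case False
      then obtain l' where l': "l = Suc l'" "1 \<le> l'" using lh by (cases l) auto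
      then show ?thesis using rell[of l' i t'] lh Suc by (simp add: sigma_range)
    qed
  qed
  have upb: "L2_set (\<lambda>i. up l i (t + 1) / real (t + 1)) {..<n l} \<le> real (n l) * (\<bar>c\<bar> / (real t + 1))"
    if "1 \<le> l" "l \<le> N" for l t
  proof (rule L2_sum_bound)
    fix i assume "i < n l"
    then have "\<bar>up l i (t + 1)\<bar> \<le> c" by (rule ubound[OF that])
    then have "\<bar>up l i (t + 1)\<bar> \<le> \<bar>c\<bar>" by linarith
    then show "\<bar>up l i (t + 1) / real (t + 1)\<bar> \<le> \<bar>c\<bar> / (real t + 1)"
      by (simp add: divide_right_mono add.commute)
  qed
  have lay: "\<exists>R. R \<longlonglongrightarrow> 0 \<and> (\<forall>t. e l (t + 1) \<le> P l * e 1 (t + 1) + R t)"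
    if "1 \<le> l" "l \<le> N" for l
    using that
  proof (induction l rule: nat_induct_at_least)
    case base then show ?case by (intro exI[of _ "\<lambda>_. 0"]) (simp add: P1)
  next
    case (Suc l)
    then obtain R where R: "R \<longlonglongrightarrow> 0" and Rb: "\<And>t. e l (t + 1) \<le> P l * e 1 (t + 1) + R t" by auto
    define K where "K = real (n (Suc l)) * \<bar>c\<bar>"
    define R' where "R' t = sF (Suc l) / Vth * R t + K / Vth / (real t + 1)" for t
    have "(\<lambda>t. sF (Suc l) / Vth * R t + K / Vth / (real t + 1)) \<longlonglongrightarrow> sF (Suc l) / Vth * 0 + 0"
      by (intro tendsto_intros R inv_lim)
    then have R'0: "R' \<longlonglongrightarrow> 0" unfolding R'_def by simp
    have lN: "l \<le> N - 1" using Suc.prems by simp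
    have "e (Suc l) (t + 1) \<le> P (Suc l) * e 1 (t + 1) + R' t" for t
    proof -
      have "e (Suc l) (t + 1) = L2_set (\<lambda>i. sigma (1 / Vth * (mat_vec (n l) (F (l + 1)) (avg_rate s l (t + 1)) i + b (l + 1) i
           - up (l + 1) i (t + 1) / real (t + 1))) - sigma (1 / Vth * (mat_vec (n l) (F (l + 1)) (astar l) i + b (l + 1) i))) {..<n (l + 1)}"
        unfolding e_def vd_def
      proof (intro L2_set_cong refl)
        fix i assume "i \<in> {..<n (l + 1)}"
        then have i: "i < n (l + 1)" by simp
        show "avg_rate s (Suc l) (t + 1) i - astar (Suc l) i = sigma (1 / Vth * (mat_vec (n l) (F (l + 1)) (avg_rate s l (t + 1)) i + b (l + 1) i
           - up (l + 1) i (t + 1) / real (t + 1))) - sigma (1 / Vth * (mat_vec (n l) (F (l + 1)) (astar l) i + b (l + 1) i))"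
          using rell[OF Suc.hyps lN i, of t] asS[OF Suc.hyps, of i] by (simp add: f_layer_def)
      qed simp
      also have "\<dots> \<le> 1 / Vth * (L2_set (\<lambda>i. mat_vec (n l) (F (l + 1)) (avg_rate s l (t + 1)) i - mat_vec (n l) (F (l + 1)) (astar l) i) {..<n (l + 1)}
           + L2_set (\<lambda>i. up (l + 1) i (t + 1) / real (t + 1)) {..<n (l + 1)})"
        by (rule sig_pert[OF iV])
      also have "\<dots> \<le> 1 / Vth * (sF (Suc l) * e l (t + 1) + K / (real t + 1))"
      proof (intro mult_left_mono[OF _ iV] add_mono)
        show "L2_set (\<lambda>i. mat_vec (n l) (F (l + 1)) (avg_rate s l (t + 1)) i - mat_vec (n l) (F (l + 1)) (astar l) i) {..<n (l + 1)}
          \<le> sF (Suc l) * e l (t + 1)"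
          unfolding sF_def e_def vd_def using mat_lip by simp
        show "L2_set (\<lambda>i. up (l + 1) i (t + 1) / real (t + 1)) {..<n (l + 1)} \<le> K / (real t + 1)"
          using upb[of "l + 1" t] Suc.prems unfolding K_def by simp
      qed
      also have "\<dots> \<le> 1 / Vth * (sF (Suc l) * (P l * e 1 (t + 1) + R t) + K / (real t + 1))"
        by (intro mult_left_mono[OF _ iV] add_mono mult_left_mono[OF Rb sF0]) auto
      also have "\<dots> = P (Suc l) * e 1 (t + 1) + R' t"
        unfolding R'_def PS[OF Suc.hyps] by (rule alg1[OF Vth]) simp
      finally show ?thesis .
    qed
    then show ?case using R'0 by blast
  qed

  define xi where "xi t = L2_set (\<lambda>i. mat_vec m (F 1) (avg_input x t) i - mat_vec m (F 1) xstar i) {..<n 1}" for t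
  have xic: "(\<lambda>t. mat_vec m (F 1) (avg_input x t) i) \<longlonglongrightarrow> mat_vec m (F 1) xstar i" for i
    unfolding mat_vec_def by (intro tendsto_sum tendsto_mult tendsto_const xconv) simp
  have "(\<lambda>t. sqrt (\<Sum>i<n 1. (mat_vec m (F 1) (avg_input x t) i - mat_vec m (F 1) xstar i)\<^sup>2))
      \<longlonglongrightarrow> sqrt (\<Sum>i<n 1. (mat_vec m (F 1) xstar i - mat_vec m (F 1) xstar i)\<^sup>2)"
    by (intro tendsto_intros xic)
  then have xi0: "xi \<longlonglongrightarrow> 0" unfolding xi_def L2_set_def by simp
  have aNb: "L2_set (avg_rate s N t) {..<n N} \<le> real (n N) * 1" for t
    by (rule L2_sum_bound) (use range[OF N1 order_refl] in auto)
  have l1: "e 1 (t + 1) \<le> 1 / Vth * (sW * e N t + sW * real (n N) / (real t + 1) + xi t + real (n 1) * (\<bar>c\<bar> / (real t + 1)))" for t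
  proof -
    define X where "X i = real t / real (t + 1) * mat_vec (n N) W (avg_rate s N t) i + mat_vec m (F 1) (avg_input x t) i" for i
    define Y where "Y i = mat_vec (n N) W (astar N) i + mat_vec m (F 1) xstar i" for i
    have "e 1 (t + 1) = L2_set (\<lambda>i. sigma (1 / Vth * (X i + b 1 i - up 1 i (t + 1) / real (t + 1))) - sigma (1 / Vth * (Y i + b 1 i))) {..<n 1}"
      unfolding e_def vd_def
    proof (intro L2_set_cong refl)
      fix i assume "i \<in> {..<n 1}"
      then have i: "i < n 1" by simp
      show "avg_rate s 1 (t + 1) i - astar 1 i = sigma (1 / Vth * (X i + b 1 i - up 1 i (t + 1) / real (t + 1))) - sigma (1 / Vth * (Y i + b 1 i))"
        using rel1[OF i, of t] fix1[OF i] as1 unfolding X_def Y_def by (simp add: f_first_def)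
    qed
    also have "\<dots> \<le> 1 / Vth * (L2_set (\<lambda>i. X i - Y i) {..<n 1} + L2_set (\<lambda>i. up 1 i (t + 1) / real (t + 1)) {..<n 1})"
      by (rule sig_pert[OF iV])
    also have "\<dots> \<le> 1 / Vth * ((sW * e N t + sW * real (n N) / (real t + 1) + xi t) + real (n 1) * (\<bar>c\<bar> / (real t + 1)))"
    proof (intro mult_left_mono[OF _ iV] add_mono)
      show "L2_set (\<lambda>i. up 1 i (t + 1) / real (t + 1)) {..<n 1} \<le> real (n 1) * (\<bar>c\<bar> / (real t + 1))"
        by (rule upb[OF order_refl N1])
      have XY: "X i - Y i = (mat_vec (n N) W (avg_rate s N t) i - mat_vec (n N) W (astar N) i)
           + (- (mat_vec (n N) W (avg_rate s N t) i / (real t + 1)))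
           + (mat_vec m (F 1) (avg_input x t) i - mat_vec m (F 1) xstar i)" for i
      proof -
        have rr: "real t / real (t + 1) * M = M - M / (real t + 1)" for M
          using alg2[of "real t" M] by (simp add: add.commute)
        show ?thesis unfolding X_def Y_def rr by (simp add: algebra_simps)
      qed
      have "L2_set (\<lambda>i. X i - Y i) {..<n 1} \<le>
          L2_set (\<lambda>i. (mat_vec (n N) W (avg_rate s N t) i - mat_vec (n N) W (astar N) i)
           + (- (mat_vec (n N) W (avg_rate s N t) i / (real t + 1)))) {..<n 1}
          + xi t"
        unfolding XY xi_def by (rule L2_set_triangle_ineq)
      also have "\<dots> \<le> (L2_set (\<lambda>i. mat_vec (n N) W (avg_rate s N t) i - mat_vec (n N) W (astar N) i) {..<n 1}
          + L2_set (\<lambda>i. - (mat_vec (n N) W (avg_rate s N t) i / (real t + 1))) {..<n 1}) + xi t"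
        by (intro add_right_mono L2_set_triangle_ineq)
      also have "L2_set (\<lambda>i. mat_vec (n N) W (avg_rate s N t) i - mat_vec (n N) W (astar N) i) {..<n 1} \<le> sW * e N t"
        unfolding sW_def e_def vd_def using mat_lip by simp
      also have "L2_set (\<lambda>i. - (mat_vec (n N) W (avg_rate s N t) i / (real t + 1))) {..<n 1}
          = L2_set (mat_vec (n N) W (avg_rate s N t)) {..<n 1} * (1 / (real t + 1))"
        by (subst L2_set_left_distrib) (auto simp: L2_set_def)
      also have "\<dots> \<le> (sW * (real (n N) * 1)) * (1 / (real t + 1))"
        unfolding sW_def by (intro mult_right_mono order.trans[OF spec_bound] mult_left_mono[OF aNb spec_norm_nonneg]) auto
      finally show "L2_set (\<lambda>i. X i - Y i) {..<n 1} \<le> sW * e N t + sW * real (n N) / (real t + 1) + xi t"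
        by simp
    qed
    finally show ?thesis .
  qed
  define RN where "RN = (SOME R. R \<longlonglongrightarrow> 0 \<and> (\<forall>t. e N (t + 1) \<le> P N * e 1 (t + 1) + R t))"
  have RN: "RN \<longlonglongrightarrow> 0 \<and> (\<forall>t. e N (t + 1) \<le> P N * e 1 (t + 1) + RN t)"
    unfolding RN_def using lay[OF N1 order_refl] by (rule someI_ex)
  define D where "D t = 1 / Vth * (sW * RN t + sW * real (n N) / (real (Suc t) + 1) + xi (Suc t) + real (n 1) * (\<bar>c\<bar> / (real (Suc t) + 1)))" for t
  have D0: "D \<longlonglongrightarrow> 0"
  proof -
    have a: "(\<lambda>t. sW * real (n N) / (real (Suc t) + 1)) \<longlonglongrightarrow> 0"
      using LIMSEQ_Suc[OF inv_lim[of "sW * real (n N)"]] by simp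
    have b': "(\<lambda>t. real (n 1) * \<bar>c\<bar> / (real (Suc t) + 1)) \<longlonglongrightarrow> 0"
      using LIMSEQ_Suc[OF inv_lim[of "real (n 1) * \<bar>c\<bar>"]] by simp
    have "(\<lambda>t. 1 / Vth * (sW * RN t + sW * real (n N) / (real (Suc t) + 1) + xi (Suc t) + real (n 1) * \<bar>c\<bar> / (real (Suc t) + 1)))
       \<longlonglongrightarrow> 1 / Vth * (sW * 0 + 0 + 0 + 0)"
      by (intro tendsto_intros a b' LIMSEQ_Suc[OF xi0] RN[THEN conjunct1])
    then show ?thesis unfolding D_def by simp
  qed
  define E where "E t = e 1 (Suc t)" for t
  define B where "B = (\<Sum>i<n 1. 1 + \<bar>A1 i\<bar>)"
  have EB: "E t \<le> B" for t
  proof -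
    have "E t \<le> (\<Sum>i<n 1. \<bar>avg_rate s 1 (Suc t) i - astar 1 i\<bar>)"
      unfolding E_def e_def vd_def by (rule L2_set_le_sum_abs)
    also have "\<dots> \<le> B" unfolding B_def as1
    proof (rule sum_mono)
      fix i assume "i \<in> {..<n 1}"
      then have "0 \<le> avg_rate s 1 (Suc t) i \<and> avg_rate s 1 (Suc t) i \<le> 1"
        using range[OF order_refl N1] by simp
      then show "\<bar>avg_rate s 1 (Suc t) i - A1 i\<bar> \<le> 1 + \<bar>A1 i\<bar>" by linarith
    qed
    finally show ?thesis .
  qed
  have Erec: "E (Suc t) \<le> \<rho> * E t + D t" for t
  proof -
    have "E (Suc t) \<le> 1 / Vth * (sW * e N (t + 1) + sW * real (n N) / (real (Suc t) + 1) + xi (Suc t) + real (n 1) * (\<bar>c\<bar> / (real (Suc t) + 1)))"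
      using l1[of "Suc t"] unfolding E_def by simp
    also have "\<dots> \<le> 1 / Vth * (sW * (P N * e 1 (t + 1) + RN t) + sW * real (n N) / (real (Suc t) + 1) + xi (Suc t) + real (n 1) * (\<bar>c\<bar> / (real (Suc t) + 1)))"
      using RN sW0 iV by (intro mult_left_mono add_mono mult_left_mono) auto
    also have "\<dots> = \<rho> * E t + D t" unfolding \<rho>_def E_def D_def by (simp add: algebra_simps)
    finally show ?thesis .
  qed
  have E0: "E \<longlonglongrightarrow> 0"
    by (rule contr_seq[OF _ EB r0 r1 D0 Erec]) (simp add: E_def e0)
  show ?thesis
  proof (intro exI[of _ astar] conjI allI impI)
    fix i assume "i < n 1"
    then show "astar 1 i = f_first Vth n m N W F b (f_chain Vth n F b N (astar 1)) xstar i"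
      using fix1 as1 unfolding astar_def ch_def by simp
  next
    fix l i assume "1 \<le> l \<and> l \<le> N - 1" "i < n (l + 1)"
    then show "astar (l + 1) i = f_layer Vth n F b (l + 1) (astar l) i" using asS by simp
  next
    fix l i assume lh: "1 \<le> l \<and> l \<le> N" and i: "i < n l"
    obtain R where R: "R \<longlonglongrightarrow> 0" and Rb: "\<And>t. e l (t + 1) \<le> P l * e 1 (t + 1) + R t"
      using lay lh by blast
    have up0: "(\<lambda>t. P l * E t + R t) \<longlonglongrightarrow> P l * 0 + 0" by (intro tendsto_intros E0 R)
    have el0: "(\<lambda>t. e l (Suc t)) \<longlonglongrightarrow> 0"
    proof (rule tendsto_sandwich[OF _ _ tendsto_const])
      show "\<forall>\<^sub>F t in sequentially. 0 \<le> e l (Suc t)" by (simp add: e0)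
      show "\<forall>\<^sub>F t in sequentially. e l (Suc t) \<le> P l * E t + R t"
        using Rb unfolding E_def by simp
      show "(\<lambda>t. P l * E t + R t) \<longlonglongrightarrow> 0" using up0 by simp
    qed
    have "(\<lambda>t. avg_rate s l (Suc t) i - astar l i) \<longlonglongrightarrow> 0"
    proof (rule Lim_null_comparison[OF _ el0])
      show "\<forall>\<^sub>F t in sequentially. norm (avg_rate s l (Suc t) i - astar l i) \<le> e l (Suc t)"
        unfolding e_def vd_def
        by (intro always_eventually allI) (use coord_le_L2[of "{..<n l}" i] i in simp)
    qed
    then have "(\<lambda>t. avg_rate s l (Suc t) i) \<longlonglongrightarrow> astar l i" by (simp add: LIM_zero_iff)
    then show "(\<lambda>t. avg_rate s l t i) \<longlonglongrightarrow> astar l i" by (rule LIMSEQ_imp_Suc)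
  qed
qed
end
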